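(* In the Setting below, $U$ is a commutative associative subalgebra of $\Gamma(\mathcal M)$ (under composition), and the linear map $L\otimes_{\mathbb F}U\to N_{\mathcal M}$, $a\otimes\alpha\mapsto a\alpha$, is an isomorphism of algebras, where $L\otimes_{\mathbb F}U$ carries the product $(a\otimes\alpha)(b\otimes\beta)=ab\otimes\alpha\beta$. In particular $N_{\mathcal M}\cong L\otimes_{\mathbb F}U\cong\mathfrak{sl}_2(U)$.
   Context: Setting. Let $\mathbb F$ be a field of characteristic different from $2$ and $3$. A Malcev algebra is an anticommutative algebra $\mathcal M$ over $\mathbb F$ satisfying $(xz)(yt)=((xy)z)t+((yz)t)x+((zt)x)y+((tx)y)z$. Products are left-normed: $xyz=(xy)z$, $xyzt=((xy)z)t$. Put $J(x,y,z)=xyz+yzx+zxy$ (the Jacobian), $\{x,y,z\}=xyz-xzy+2x(yz)$, and $h(y,z,t,x,u)=\{yz,t,u\}x+\{yz,t,x\}u+\{yx,z,u\}t+\{yu,z,x\}t$. The variety $\mathcal H$ consists of the Malcev algebras satisfying $h(y,z,t,x,u)=0$ identically. The centroid $\Gamma(\mathcal M)$ is the set of linear maps $\alpha$ of $\mathcal M$ (written on the right) with $(xy)\alpha=x(y\alpha)=(x\alpha)y$ for all $x,y$. Put $p(x,y,z,t)=-\{zt,x,y\}-\{yt,z,x\}+\{xt,y,z\}$ and define the operator $\alpha(y,z,t)$ by $x\,\alpha(y,z,t)=p(x,y,z,t)$; for $\mathcal M\in\mathcal H$ these operators lie in $\Gamma(\mathcal M)$. Let $L=\mathfrak{sl}_2(\mathbb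 F)$ with basis $E,H,F$ and products $EH=E$, $FH=-F$, $EF=\tfrac12 H$. Standing assumption: $\mathcal M\in\mathcal H$ contains $L$ as a subalgebra and $mL\neq 0$ for every $0\neq m\in\mathcal M$. Define $N_{\mathcal M}=\{m\in\mathcal M: J(m,a,b)=0\ \forall a,b\in L\}$ and $J_{\mathcal M}=\{m\in\mathcal M:\{m,a,b\}=0\ \forall a,b\in L\}$. Known facts (from prior work): $\mathcal M=N_{\mathcal M}\oplus J_{\mathcal M}$; $J_{\mathcal M}$ is a direct sum of $L$-submodules $V_{2i}$, each with a basis $\{u_i,v_i\}$ satisfying $u_iH=u_i$, $v_iH=-v_i$, $u_iE=v_i$, $u_iF=0$, $v_iE=0$, $v_iF=-u_i$; and, letting $U$ be the linear span of the operators $\alpha(m,a,b)$ ($m\in\mathcal M$, $a,b\in L$), $U\subseteq\Gamma(\mathcal M)$ and $N_{\mathcal M}=\sum_{\alpha\in U}L\alpha$. *)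

theory Defs
  imports Complex_Main "HOL-Library.Function_Algebras"
begin

text \<open>Products are left-normed.  Linear maps are
  written on the right in the paper: x\<alpha> is rendered as \<alpha> x, and the
  product \<alpha>\<beta> (first \<alpha>, then \<beta>) as \<beta> \<circ> \<alpha>.\<close>

definition bilinear_prod :: "('f::field \<Rightarrow> 'm::ab_group_add \<Rightarrow> 'm) \<Rightarrow> ('m \<Rightarrow> 'm \<Rightarrow> 'm) \<Rightarrow> bool" where
  "bilinear_prod sc mu \<longleftrightarrow>
     (\<forall>x y z. mu (x + y) z = mu x z + mu y z) \<and>
     (\<forall>x y z. mu x (y + z) = mu x y + mu x z) \<and>
     (\<forall>c x y. mu (sc c x) y = sc c (mu x y)) \<and>
     (\<forall>c x y. mu x (sc c y) = sc c (mu x y))"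

definition malcev_algebra :: "('f::field \<Rightarrow> 'm::ab_group_add \<Rightarrow> 'm) \<Rightarrow> ('m \<Rightarrow> 'm \<Rightarrow> 'm) \<Rightarrow> bool" where
  "malcev_algebra sc mu \<longleftrightarrow>
     vector_space sc \<and> bilinear_prod sc mu \<and>
     (\<forall>x. mu x x = 0) \<and>
     (\<forall>x y z t. mu (mu x z) (mu y t) =
        mu (mu (mu x y) z) t + mu (mu (mu y z) t) x + mu (mu (mu z t) x) y + mu (mu (mu t x) y) z)"

definition jac :: "('m::ab_group_add \<Rightarrow> 'm \<Rightarrow> 'm) \<Rightarrow> 'm \<Rightarrow> 'm \<Rightarrow> 'm \<Rightarrow> 'm" where
  "jac mu x y z = mu (mu x y) z + mu (mu y z) x + mu (mu z x) y"

definition trip :: "('f::field \<Rightarrow> 'm::ab_group_add \<Rightarrow> 'm) \<Rightarrow> ('m \<Rightarrow> 'm \<Rightarrow> 'm) \<Rightarrow> 'm \<Rightarrow> 'm \<Rightarrow> 'm \<Rightarrow> 'm" where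
  "trip sc mu x y z = mu (mu x y) z - mu (mu x z) y + sc 2 (mu x (mu y z))"

definition hpoly :: "('f::field \<Rightarrow> 'm::ab_group_add \<Rightarrow> 'm) \<Rightarrow> ('m \<Rightarrow> 'm \<Rightarrow> 'm) \<Rightarrow> 'm \<Rightarrow> 'm \<Rightarrow> 'm \<Rightarrow> 'm \<Rightarrow> 'm \<Rightarrow> 'm" where
  "hpoly sc mu y z t x u =
     mu (trip sc mu (mu y z) t u) x + mu (trip sc mu (mu y z) t x) u +
     mu (trip sc mu (mu y x) z u) t + mu (trip sc mu (mu y u) z x) t"

definition in_H :: "('f::field \<Rightarrow> 'm::ab_group_add \<Rightarrow> 'm) \<Rightarrow> ('m \<Rightarrow> 'm \<Rightarrow> 'm) \<Rightarrow> bool" where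
  "in_H sc mu \<longleftrightarrow> malcev_algebra sc mu \<and> (\<forall>y z t x u. hpoly sc mu y z t x u = 0)"

definition centroid :: "('f::field \<Rightarrow> 'm::ab_group_add \<Rightarrow> 'm) \<Rightarrow> ('m \<Rightarrow> 'm \<Rightarrow> 'm) \<Rightarrow> ('m \<Rightarrow> 'm) set" where
  "centroid sc mu = {\<alpha>. Vector_Spaces.linear sc sc \<alpha> \<and>
      (\<forall>x y. \<alpha> (mu x y) = mu x (\<alpha> y) \<and> \<alpha> (mu x y) = mu (\<alpha> x) y)}"

definition ppoly :: "('f::field \<Rightarrow> 'm::ab_group_add \<Rightarrow> 'm) \<Rightarrow> ('m \<Rightarrow> 'm \<Rightarrow> 'm) \<Rightarrow> 'm \<Rightarrow> 'm \<Rightarrow> 'm \<Rightarrow> 'm \<Rightarrow> 'm" where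
  "ppoly sc mu x y z t =
     - trip sc mu (mu z t) x y - trip sc mu (mu y t) z x + trip sc mu (mu x t) y z"

definition alpha_op :: "('f::field \<Rightarrow> 'm::ab_group_add \<Rightarrow> 'm) \<Rightarrow> ('m \<Rightarrow> 'm \<Rightarrow> 'm) \<Rightarrow> 'm \<Rightarrow> 'm \<Rightarrow> 'm \<Rightarrow> ('m \<Rightarrow> 'm)" where
  "alpha_op sc mu y z t = (\<lambda>x. ppoly sc mu x y z t)"

definition sl2_span :: "('f::field \<Rightarrow> 'm::ab_group_add \<Rightarrow> 'm) \<Rightarrow> 'm \<Rightarrow> 'm \<Rightarrow> 'm \<Rightarrow> 'm set" where
  "sl2_span sc E H F = module.span sc {E, H, F}"

definition sl2_triple :: "('f::field \<Rightarrow> 'm::ab_group_add \<Rightarrow> 'm) \<Rightarrow> ('m \<Rightarrow> 'm \<Rightarrow> 'm) \<Rightarrow> 'm \<Rightarrow> 'm \<Rightarrow> 'm \<Rightarrow> bool" where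
  "sl2_triple sc mu E H F \<longleftrightarrow>
     E \<noteq> H \<and> E \<noteq> F \<and> H \<noteq> F \<and> \<not> module.dependent sc {E, H, F} \<and>
     mu E H = E \<and> mu F H = - F \<and> mu E F = sc (1/2) H"

definition N_M :: "('f::field \<Rightarrow> 'm::ab_group_add \<Rightarrow> 'm) \<Rightarrow> ('m \<Rightarrow> 'm \<Rightarrow> 'm) \<Rightarrow> 'm set \<Rightarrow> 'm set" where
  "N_M sc mu L = {m. \<forall>a\<in>L. \<forall>b\<in>L. jac mu m a b = 0}"

definition J_M :: "('f::field \<Rightarrow> 'm::ab_group_add \<Rightarrow> 'm) \<Rightarrow> ('m \<Rightarrow> 'm \<Rightarrow> 'm) \<Rightarrow> 'm set \<Rightarrow> 'm set" where
  "J_M sc mu L = {m. \<forall>a\<in>L. \<forall>b\<in>L. trip sc mu m a b = 0}"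

definition op_scale :: "('f::field \<Rightarrow> 'm::ab_group_add \<Rightarrow> 'm) \<Rightarrow> 'f \<Rightarrow> ('m \<Rightarrow> 'm) \<Rightarrow> ('m \<Rightarrow> 'm)" where
  "op_scale sc c f = (\<lambda>x. sc c (f x))"

definition U_ops :: "('f::field \<Rightarrow> 'm::ab_group_add \<Rightarrow> 'm) \<Rightarrow> ('m \<Rightarrow> 'm \<Rightarrow> 'm) \<Rightarrow> 'm set \<Rightarrow> ('m \<Rightarrow> 'm) set" where
  "U_ops sc mu L = module.span (op_scale sc) {alpha_op sc mu m a b | m a b. a \<in> L \<and> b \<in> L}"

end

theory Submission
  imports Defs
begin


datatype tr = V nat | P tr tr

fun tlt :: "tr \<Rightarrow> tr \<Rightarrow> bool" where
  "tlt (V i) (V j) = (i < j)"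
| "tlt (V i) (P a b) = True"
| "tlt (P a b) (V j) = False"
| "tlt (P a b) (P c d) = (tlt a c \<or> (a = c \<and> tlt b d))"

type_synonym lc = "(int \<times> tr) list"

definition mulT :: "tr \<Rightarrow> tr \<Rightarrow> lc" where
  "mulT a b = (if a = b then [] else if tlt a b then [(1, P a b)] else [(-1, P b a)])"

definition smul :: "int \<Rightarrow> lc \<Rightarrow> lc" where
  "smul c xs = map (\<lambda>(d,t). (c*d, t)) xs"

fun mulL :: "lc \<Rightarrow> lc \<Rightarrow> lc" where
  "mulL [] ys = []"
| "mulL ((c,a)#xs) ys = concat (map (\<lambda>(d,b). smul (c*d) (mulT a b)) ys) @ mulL xs ys"

fun ins0 :: "int \<times> tr \<Rightarrow> lc \<Rightarrow> lc" where
  "ins0 p [] = [p]"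
| "ins0 (c,t) ((d,s)#r) = (if t = s then (if c + d = 0 then r else (c+d,s)#r)
      else if tlt t s then (c,t)#(d,s)#r else (d,s) # ins0 (c,t) r)"

definition ins :: "int \<times> tr \<Rightarrow> lc \<Rightarrow> lc" where
  "ins p xs = (if fst p = 0 then xs else ins0 p xs)"

definition nrm :: "lc \<Rightarrow> lc" where "nrm xs = foldr ins xs []"

fun evt :: "('m \<Rightarrow> 'm \<Rightarrow> 'm) \<Rightarrow> (nat \<Rightarrow> 'm) \<Rightarrow> tr \<Rightarrow> 'm" where
  "evt mu \<rho> (V i) = \<rho> i"
| "evt mu \<rho> (P a b) = mu (evt mu \<rho> a) (evt mu \<rho> b)"

definition evL :: "('f::field \<Rightarrow> 'm::ab_group_add \<Rightarrow> 'm) \<Rightarrow> ('m \<Rightarrow> 'm \<Rightarrow> 'm) \<Rightarrow> (nat \<Rightarrow> 'm) \<Rightarrow> lc \<Rightarrow> 'm" where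
  "evL sc mu \<rho> xs = sum_list (map (\<lambda>(c,t). sc (of_int c) (evt mu \<rho> t)) xs)"

definition tripL where
  "tripL x y z = mulL (mulL x y) z @ smul (-1) (mulL (mulL x z) y) @ smul 2 (mulL x (mulL y z))"
definition malL where
  "malL x y z t = mulL (mulL x z) (mulL y t) @ smul (-1) (mulL (mulL (mulL x y) z) t @ mulL (mulL (mulL y z) t) x
      @ mulL (mulL (mulL z t) x) y @ mulL (mulL (mulL t x) y) z)"
definition hL where
  "hL y z t x u = mulL (tripL (mulL y z) t u) x @ mulL (tripL (mulL y z) t x) u @
     mulL (tripL (mulL y x) z u) t @ mulL (tripL (mulL y u) z x) t"
definition pL where
  "pL x y z t = smul (-1) (tripL (mulL z t) x y) @ smul (-1) (tripL (mulL y t) z x) @ tripL (mulL x t) y z"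

definition vv :: "nat \<Rightarrow> lc" where "vv i = [(1, V i)]"

locale malc =
  fixes sc :: "'f::field \<Rightarrow> 'm::ab_group_add \<Rightarrow> 'm" and mu :: "'m \<Rightarrow> 'm \<Rightarrow> 'm"
  assumes vs: "vector_space sc"
    and addL: "\<And>x y z. mu (x + y) z = mu x z + mu y z"
    and addR: "\<And>x y z. mu x (y + z) = mu x y + mu x z"
    and scL: "\<And>c x y. mu (sc c x) y = sc c (mu x y)"
    and scR: "\<And>c x y. mu x (sc c y) = sc c (mu x y)"
    and sq0: "\<And>x. mu x x = 0"
    and mal: "\<And>x y z t. mu (mu x z) (mu y t) =
        mu (mu (mu x y) z) t + mu (mu (mu y z) t) x + mu (mu (mu z t) x) y + mu (mu (mu t x) y) z"
begin

sublocale V: vector_space sc by (rule vs)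

lemma zeroL[simp]: "mu 0 x = 0" using addL[of 0 0 x] by (metis add_cancel_right_right add_0)
lemma zeroR[simp]: "mu x 0 = 0" using addR[of x 0 0] by (metis add_cancel_right_right add_0)
lemma negL[simp]: "mu (- x) y = - mu x y" using addL[of x "-x" y] by (metis add.right_inverse zeroL add_eq_0_iff add.commute)
lemma negR[simp]: "mu x (- y) = - mu x y" using addR[of x y "-y"] by (metis add.right_inverse zeroR add_eq_0_iff add.commute)
lemma diffL[simp]: "mu (x - y) z = mu x z - mu y z" by (metis diff_conv_add_uminus addL negL)
lemma diffR[simp]: "mu x (y - z) = mu x y - mu x z" by (metis diff_conv_add_uminus addR negR)
lemma anti: "mu x y = - mu y x"
proof -
  have "mu (x+y) (x+y) = mu x x + mu y x + (mu x y + mu y y)" by (simp only: addL addR)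
  then have "0 = mu y x + mu x y" by (simp add: sq0)
  then show ?thesis by (simp add: eq_neg_iff_add_eq_0 add.commute)
qed

lemma sc_int_neg1[simp]: "sc (of_int (-1)) x = - x" by simp
lemma sc_neg1[simp]: "sc (-1) x = - x" by simp

lemma evL_nil[simp]: "evL sc mu \<rho> [] = 0" by (simp add: evL_def)
lemma evL_cons[simp]: "evL sc mu \<rho> ((c,t)#xs) = sc (of_int c) (evt mu \<rho> t) + evL sc mu \<rho> xs"
  by (simp add: evL_def)
lemma evL_app[simp]: "evL sc mu \<rho> (xs @ ys) = evL sc mu \<rho> xs + evL sc mu \<rho> ys"
  by (simp add: evL_def)
lemma evL_smul[simp]: "evL sc mu \<rho> (smul c xs) = sc (of_int c) (evL sc mu \<rho> xs)"
  by (induction xs) (auto simp: smul_def V.scale_right_distrib)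
lemma evL_mulT[simp]: "evL sc mu \<rho> (mulT a b) = mu (evt mu \<rho> a) (evt mu \<rho> b)"
  unfolding mulT_def using anti[of "evt mu \<rho> a" "evt mu \<rho> b"] by (auto simp: sq0)
lemma evL_concat[simp]: "evL sc mu \<rho> (concat xss) = sum_list (map (evL sc mu \<rho>) xss)"
  by (induction xss) auto
lemma mu_sum_listR: "mu x (sum_list (map f ys)) = sum_list (map (\<lambda>y. mu x (f y)) ys)"
  by (induction ys) (auto simp: addR)
lemma evL_mulL[simp]: "evL sc mu \<rho> (mulL xs ys) = mu (evL sc mu \<rho> xs) (evL sc mu \<rho> ys)"
proof (induction xs)
  case Nil then show ?case by simp
next
  case (Cons p xs)
  obtain c a where p: "p = (c,a)" by (cases p)
  have "evL sc mu \<rho> (concat (map (\<lambda>(d,b). smul (c*d) (mulT a b)) ys)) =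
        mu (sc (of_int c) (evt mu \<rho> a)) (evL sc mu \<rho> ys)"
  proof (induction ys)
    case Nil then show ?case by simp
  next
    case (Cons q ys)
    obtain d b where q: "q = (d,b)" by (cases q)
    show ?case using Cons by (simp add: q addR scL scR)
  qed
  then show ?case using Cons by (simp add: p addL)
qed

lemma sc_add_int: "sc (of_int c) v + sc (of_int d) v = sc (of_int (c + d)) v"
  by (simp add: V.scale_left_distrib)

lemma evL_ins0: "evL sc mu \<rho> (ins0 p xs) = evL sc mu \<rho> (p # xs)"
proof (induction p xs rule: ins0.induct)
  case (1 p) then show ?case by (cases p) simp
next
  case (2 c t d s r)
  let ?v = "evt mu \<rho> s"
  show ?case
  proof (cases "t = s")
    case True
    have e: "evL sc mu \<rho> ((c,t)#(d,s)#r) = sc (of_int (c + d)) ?v + evL sc mu \<rho> r"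
      using True by (simp only: evL_cons add.assoc[symmetric] sc_add_int)
    show ?thesis
    proof (cases "c + d = 0")
      case True
      then show ?thesis using e \<open>t = s\<close> by simp
    next
      case False then show ?thesis using e \<open>t = s\<close> by simp
    qed
  next
    case False
    show ?thesis
    proof (cases "tlt t s")
      case True then show ?thesis using False by simp
    next
      case nt: False
      have "ins0 (c,t) ((d,s)#r) = (d,s) # ins0 (c,t) r" using False nt by simp
      then show ?thesis using 2[OF False nt] by (simp only: evL_cons add.left_commute)
    qed
  qed
qed

lemma evL_ins: "evL sc mu \<rho> (ins p xs) = evL sc mu \<rho> (p # xs)"
  by (cases p) (auto simp: ins_def evL_ins0)

lemma evL_nrm: "evL sc mu \<rho> (nrm xs) = evL sc mu \<rho> xs"
  by (induction xs) (auto simp: nrm_def evL_ins)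

lemma nrm_zero: "nrm xs = [] \<Longrightarrow> evL sc mu \<rho> xs = 0"
  by (metis evL_nil evL_nrm)

lemma evL_vv[simp]: "evL sc mu \<rho> (vv i) = \<rho> i" by (simp add: vv_def)

lemma evL_trip: "evL sc mu \<rho> (tripL x y z) = trip sc mu (evL sc mu \<rho> x) (evL sc mu \<rho> y) (evL sc mu \<rho> z)"
  by (simp add: tripL_def trip_def)
lemma evL_mal: "evL sc mu \<rho> (malL x y z t) = 0"
  by (simp add: malL_def mal[of "evL sc mu \<rho> x" "evL sc mu \<rho> z"])
lemma evL_h: "evL sc mu \<rho> (hL y z t x u) = hpoly sc mu (evL sc mu \<rho> y) (evL sc mu \<rho> z) (evL sc mu \<rho> t) (evL sc mu \<rho> x) (evL sc mu \<rho> u)"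
  by (simp add: hL_def hpoly_def evL_trip)
lemma evL_p: "evL sc mu \<rho> (pL x y z t) = ppoly sc mu (evL sc mu \<rho> x) (evL sc mu \<rho> y) (evL sc mu \<rho> z) (evL sc mu \<rho> t)"
  by (simp add: pL_def ppoly_def evL_trip)

end


definition insts1 :: "(int \<times> lc) list" where
  "insts1 = [
    (-1, mulL (malL (vv 1) (vv 3) (vv 4) (vv 2)) (vv 0)),
    (1, malL (mulL (vv 0) (vv 4)) (vv 1) (vv 3) (vv 2)),
    (-1, hL (vv 0) (vv 1) (vv 2) (vv 3) (vv 4)),
    (1, hL (vv 0) (vv 3) (vv 1) (vv 2) (vv 4)),
    (-1, hL (vv 0) (vv 2) (vv 3) (vv 1) (vv 4)),
    (-2, hL (vv 0) (vv 1) (vv 4) (vv 2) (vv 3)),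
    (-1, malL (mulL (vv 0) (vv 4)) (vv 3) (vv 1) (vv 2)),
    (-1, malL (mulL (vv 0) (vv 4)) (vv 2) (vv 1) (vv 3)),
    (1, malL (mulL (vv 0) (vv 1)) (vv 2) (vv 4) (vv 3)),
    (3, malL (mulL (vv 0) (vv 2)) (vv 1) (vv 4) (vv 3)),
    (1, malL (mulL (vv 0) (vv 2)) (vv 3) (vv 1) (vv 4)),
    (-1, mulL (malL (vv 0) (vv 1) (vv 3) (vv 2)) (vv 4)),
    (-4, mulL (malL (vv 0) (vv 2) (vv 1) (vv 3)) (vv 4)),
    (-2, mulL (malL (vv 0) (vv 1) (vv 2) (vv 3)) (vv 4)),
    (-1, malL (mulL (vv 0) (vv 1)) (vv 3) (vv 4) (vv 2)),
    (2, malL (mulL (vv 0) (vv 1)) (vv 3) (vv 2) (vv 4)),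
    (2, malL (mulL (vv 0) (vv 3)) (vv 2) (vv 4) (vv 1)),
    (1, malL (mulL (vv 0) (vv 3)) (vv 4) (vv 1) (vv 2)),
    (1, malL (mulL (vv 0) (vv 3)) (vv 2) (vv 1) (vv 4)),
    (2, malL (mulL (vv 0) (vv 1)) (vv 2) (vv 3) (vv 4)),
    (-2, mulL (malL (vv 0) (vv 3) (vv 1) (vv 2)) (vv 4)),
    (-1, hL (vv 0) (vv 1) (vv 3) (vv 2) (vv 4)),
    (-1, malL (mulL (vv 1) (vv 3)) (vv 2) (vv 0) (vv 4)),
    (2, malL (mulL (vv 0) (vv 2)) (vv 1) (vv 3) (vv 4)),
    (1, malL (mulL (vv 0) (vv 3)) (vv 1) (vv 2) (vv 4)),
    (-1, malL (mulL (vv 1) (vv 2)) (vv 3) (vv 0) (vv 4)),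
    (1, malL (mulL (vv 1) (vv 2)) (vv 0) (vv 3) (vv 4)),
    (-2, mulL (malL (vv 0) (vv 2) (vv 1) (vv 4)) (vv 3)),
    (-1, malL (mulL (vv 1) (vv 3)) (vv 0) (vv 4) (vv 2)),
    (2, malL (mulL (vv 1) (vv 3)) (vv 0) (vv 2) (vv 4)),
    (2, malL (mulL (vv 1) (vv 4)) (vv 0) (vv 3) (vv 2)),
    (3, malL (mulL (vv 1) (vv 4)) (vv 0) (vv 2) (vv 3)),
    (-2, mulL (malL (vv 0) (vv 3) (vv 1) (vv 4)) (vv 2)),
    (-2, malL (mulL (vv 1) (vv 3)) (vv 2) (vv 4) (vv 0)),
    (1, malL (mulL (vv 1) (vv 4)) (vv 2) (vv 0) (vv 3)),
    (1, malL (mulL (vv 1) (vv 4)) (vv 3) (vv 0) (vv 2)),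
    (-1, hL (vv 1) (vv 3) (vv 0) (vv 2) (vv 4)),
    (-2, mulL (malL (vv 1) (vv 2) (vv 4) (vv 3)) (vv 0)),
    (-1, mulL (malL (vv 1) (vv 3) (vv 2) (vv 4)) (vv 0)),
    (-1, mulL (malL (vv 1) (vv 2) (vv 3) (vv 4)) (vv 0)),
    (1, malL (mulL (vv 0) (vv 2)) (vv 4) (vv 1) (vv 3)),
    (-1, malL (mulL (vv 1) (vv 3)) (vv 4) (vv 0) (vv 2)),
    (-1, malL (mulL (vv 1) (vv 2)) (vv 4) (vv 0) (vv 3)),
    (-2, malL (mulL (vv 2) (vv 4)) (vv 1) (vv 0) (vv 3)),
    (2, mulL (malL (vv 0) (vv 2) (vv 4) (vv 1)) (vv 3)),
    (1, hL (vv 1) (vv 2) (vv 3) (vv 0) (vv 4)),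
    (-1, hL (vv 2) (vv 3) (vv 0) (vv 1) (vv 4)),
    (4, malL (mulL (vv 0) (vv 3)) (vv 1) (vv 4) (vv 2)),
    (2, mulL (malL (vv 0) (vv 1) (vv 4) (vv 3)) (vv 2)),
    (2, mulL (malL (vv 0) (vv 1) (vv 3) (vv 4)) (vv 2)),
    (2, mulL (malL (vv 0) (vv 1) (vv 4) (vv 2)) (vv 3)),
    (-1, mulL (malL (vv 0) (vv 4) (vv 2) (vv 3)) (vv 1)),
    (1, mulL (malL (vv 0) (vv 2) (vv 4) (vv 3)) (vv 1)),
    (1, mulL (malL (vv 0) (vv 2) (vv 3) (vv 4)) (vv 1)),
    (2, malL (mulL (vv 2) (vv 4)) (vv 0) (vv 1) (vv 3)),
    (1, mulL (malL (vv 0) (vv 2) (vv 3) (vv 1)) (vv 4))]"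

definition target1 :: lc where
  "target1 = pL (mulL (vv 0) (vv 1)) (vv 2) (vv 3) (vv 4) @ smul (-1) (mulL (vv 0) (pL (vv 1) (vv 2) (vv 3) (vv 4)))"

lemma chk1: "nrm (concat (map (\<lambda>(c,l). smul c l) insts1) @ smul (-1) target1) = []"
  by code_simp


locale malcH = malc sc mu for sc :: "'f::field \<Rightarrow> 'm::ab_group_add \<Rightarrow> 'm" and mu +
  assumes hz: "\<And>y z t x u. hpoly sc mu y z t x u = 0"
begin

lemma concat_zero: "(\<forall>p\<in>set xs. evL sc mu \<rho> (snd p) = 0) \<Longrightarrow>
   evL sc mu \<rho> (concat (map (\<lambda>(c,l). smul c l) xs)) = 0"
proof (induction xs)
  case Nil then show ?case by simp
next
  case (Cons p xs) then show ?case by (cases p) simp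
qed

lemma cent_mulL: "ppoly sc mu (mu x u) y z t = mu x (ppoly sc mu u y z t)"
proof -
  define \<rho> where "\<rho> = (\<lambda>i. [x,u,y,z,t] ! i)"
  have z: "evL sc mu \<rho> (concat (map (\<lambda>(c,l). smul c l) insts1)) = 0"
    by (rule concat_zero) (simp add: insts1_def evL_mal evL_h hz)
  have "evL sc mu \<rho> (concat (map (\<lambda>(c,l). smul c l) insts1) @ smul (-1) target1) = 0"
    using chk1 by (rule nrm_zero)
  then have "evL sc mu \<rho> target1 = 0" using z by simp
  then show ?thesis by (simp add: target1_def evL_p \<rho>_def)
qed

end


type_synonym tri = "int \<times> int \<times> int"
type_synonym el = "tri \<times> lc"

fun Lmul :: "tri \<Rightarrow> tri \<Rightarrow> tri" where
  "Lmul (a1,a2,a3) (b1,b2,b3) = (a1*b2 - a2*b1, a1*b3 - a3*b1, a2*b3 - a3*b2)"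

fun rmulL :: "lc \<Rightarrow> tri \<Rightarrow> lc" where
  "rmulL xs (b1,b2,b3) = map (\<lambda>(c,t). (c*b1, P t (V 1))) xs @ map (\<lambda>(c,t). (c*b2, P t (V 2))) xs
      @ map (\<lambda>(c,t). (c*b3, P t (V 3))) xs"

fun mulE :: "el \<Rightarrow> el \<Rightarrow> el" where
  "mulE (l1,x1) (l2,x2) = (Lmul l1 l2, rmulL x1 l2 @ smul (-1) (rmulL x2 l1))"

fun tadd :: "tri \<Rightarrow> tri \<Rightarrow> tri" where
  "tadd (a1,a2,a3) (b1,b2,b3) = (a1+b1, a2+b2, a3+b3)"
fun tsc :: "int \<Rightarrow> tri \<Rightarrow> tri" where
  "tsc k (a1,a2,a3) = (k*a1, k*a2, k*a3)"

fun addE :: "el \<Rightarrow> el \<Rightarrow> el" where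
  "addE (l1,x1) (l2,x2) = (tadd l1 l2, x1 @ x2)"
fun smE :: "int \<Rightarrow> el \<Rightarrow> el" where
  "smE k (l,x) = (tsc k l, smul k x)"

definition tripE where
  "tripE x y z = addE (mulE (mulE x y) z) (addE (smE (-1) (mulE (mulE x z) y)) (smE 2 (mulE x (mulE y z))))"
definition malE where
  "malE x y z t = addE (mulE (mulE x z) (mulE y t)) (smE (-1) (addE (mulE (mulE (mulE x y) z) t) (addE (mulE (mulE (mulE y z) t) x)
      (addE (mulE (mulE (mulE z t) x) y) (mulE (mulE (mulE t x) y) z)))))"
definition hE where
  "hE y z t x u = addE (mulE (tripE (mulE y z) t u) x) (addE (mulE (tripE (mulE y z) t x) u) (addE
     (mulE (tripE (mulE y x) z u) t) (mulE (tripE (mulE y u) z x) t)))"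
definition pE where
  "pE x y z t = addE (smE (-1) (tripE (mulE z t) x y)) (addE (smE (-1) (tripE (mulE y t) z x)) (tripE (mulE x t) y z))"
definition jacE where
  "jacE x y z = addE (mulE (mulE x y) z) (addE (mulE (mulE y z) x) (mulE (mulE z x) y))"

fun Lb :: "nat \<Rightarrow> el" where
  "Lb (Suc 0) = ((1,0,0),[])" | "Lb (Suc (Suc 0)) = ((0,1,0),[])" | "Lb _ = ((0,0,1),[])"

definition wt :: "nat list \<Rightarrow> tr" where "wt w = foldl (\<lambda>t i. P t (V i)) (V 0) w"
definition Mw :: "nat list \<Rightarrow> el" where "Mw w = ((0,0,0), [(1, wt w)])"
definition rw :: "el \<Rightarrow> nat list \<Rightarrow> el" where "rw x w = foldl (\<lambda>y i. mulE y (Lb i)) x w"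

definition nrmE :: "el \<Rightarrow> el" where "nrmE x = (fst x, nrm (snd x))"

locale sl2c = malcH sc mu for sc :: "'f::field \<Rightarrow> 'm::ab_group_add \<Rightarrow> 'm" and mu +
  fixes \<rho> :: "nat \<Rightarrow> 'm"
  assumes eh: "mu (\<rho> 1) (\<rho> 2) = \<rho> 1" and fh: "mu (\<rho> 3) (\<rho> 2) = - \<rho> 3" and ef: "mu (\<rho> 1) (\<rho> 3) = \<rho> 2"
begin

fun Lint :: "tri \<Rightarrow> 'm" where
  "Lint (a,b,c) = sc (of_int a) (\<rho> 1) + sc (of_int b) (\<rho> 2) + sc (of_int c) (\<rho> 3)"

definition Iel :: "el \<Rightarrow> 'm" where "Iel x = Lint (fst x) + evL sc mu \<rho> (snd x)"

lemma he: "mu (\<rho> 2) (\<rho> 1) = - \<rho> 1" using anti eh by metis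
lemma eh': "mu (\<rho> (Suc 0)) (\<rho> 2) = \<rho> (Suc 0)" using eh by simp
lemma he': "mu (\<rho> 2) (\<rho> (Suc 0)) = - \<rho> (Suc 0)" using he by simp
lemma ef': "mu (\<rho> (Suc 0)) (\<rho> 3) = \<rho> 2" using ef by simp
lemma hf: "mu (\<rho> 2) (\<rho> 3) = \<rho> 3" using anti fh by (metis minus_minus)
lemma fe: "mu (\<rho> 3) (\<rho> 1) = - \<rho> 2" using anti ef by metis
lemma fe': "mu (\<rho> 3) (\<rho> (Suc 0)) = - \<rho> 2" using fe by simp

lemma Lmul_ok: "mu (Lint l1) (Lint l2) = Lint (Lmul l1 l2)"
  by (cases l1; cases l2) (simp add: addL addR scL scR sq0 eh fh ef he hf fe eh' he' ef' fe' algebra_simps of_int_mult of_int_diff)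

lemma rmulL_ok: "evL sc mu \<rho> (rmulL x l) = mu (evL sc mu \<rho> x) (Lint l)"
proof (induction x)
  case Nil then show ?case by (cases l) simp
next
  case (Cons p x)
  then show ?case by (cases l; cases p) (simp add: addR addL scR scL algebra_simps of_int_mult)
qed

lemma mulE_ok: "snd A = [] \<or> snd B = [] \<Longrightarrow> Iel (mulE A B) = mu (Iel A) (Iel B)"
proof -
  assume a: "snd A = [] \<or> snd B = []"
  obtain l1 x1 where A: "A = (l1,x1)" by (cases A)
  obtain l2 x2 where B: "B = (l2,x2)" by (cases B)
  have an: "mu (Lint l1) (evL sc mu \<rho> x2) = - mu (evL sc mu \<rho> x2) (Lint l1)" by (rule anti)
  show ?thesis
  proof (cases "x1 = []")
    case True
    then show ?thesis using A B by (simp add: Iel_def Lmul_ok rmulL_ok addR an)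
  next
    case False
    then have "x2 = []" using a A B by simp
    then show ?thesis using A B by (simp add: Iel_def Lmul_ok rmulL_ok addL)
  qed
qed


lemma snd_mulE: "snd (mulE A B) = rmulL (snd A) (fst B) @ smul (-1) (rmulL (snd B) (fst A))"
  by (cases A; cases B) simp
lemma rmulL_nil[simp]: "rmulL [] l = []" by (cases l) simp
lemma smul_nil[simp]: "smul c [] = []" by (simp add: smul_def)
lemma snd_mulE_nil[simp]: "snd A = [] \<Longrightarrow> snd B = [] \<Longrightarrow> snd (mulE A B) = []"
  by (simp add: snd_mulE)
lemma snd_addE: "snd (addE A B) = snd A @ snd B" by (cases A; cases B) simp
lemma snd_addE_nil[simp]: "snd A = [] \<Longrightarrow> snd B = [] \<Longrightarrow> snd (addE A B) = []"
  by (simp add: snd_addE)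
lemma snd_smE_nil[simp]: "snd A = [] \<Longrightarrow> snd (smE k A) = []"
  by (cases A) simp
lemma snd_tripE_nil[simp]: "snd A = [] \<Longrightarrow> snd B = [] \<Longrightarrow> snd C = [] \<Longrightarrow> snd (tripE A B C) = []"
  by (simp add: tripE_def)
lemma snd_Lb[simp]: "snd (Lb i) = []"
  by (cases i rule: Lb.cases) auto

lemma Lint_tadd: "Lint (tadd a b) = Lint a + Lint b"
  by (cases a; cases b) (simp add: V.scale_left_distrib algebra_simps)
lemma Lint_tsc: "Lint (tsc k a) = sc (of_int k) (Lint a)"
  by (cases a) (simp add: V.scale_right_distrib algebra_simps)
lemma Iel_addE[simp]: "Iel (addE A B) = Iel A + Iel B"
  by (cases A; cases B) (simp add: Iel_def Lint_tadd algebra_simps)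
lemma Iel_smE[simp]: "Iel (smE k A) = sc (of_int k) (Iel A)"
  by (cases A) (simp add: Iel_def Lint_tsc V.scale_right_distrib)
lemma Iel_Lb1[simp]: "Iel (Lb 1) = \<rho> 1" by (simp add: Iel_def)
lemma Iel_Lb1'[simp]: "Iel (Lb (Suc 0)) = \<rho> (Suc 0)" by (simp add: Iel_def)
lemma Iel_Lb2[simp]: "Iel (Lb 2) = \<rho> 2" by (simp add: Iel_def numeral_2_eq_2)
lemma Iel_Lb3[simp]: "Iel (Lb 3) = \<rho> 3" by (simp add: Iel_def numeral_3_eq_3)
lemma Iel_Mw0[simp]: "Iel (Mw []) = \<rho> 0" by (simp add: Iel_def Mw_def wt_def)
lemma Iel_zero[simp]: "Iel ((0,0,0),[]) = 0" by (simp add: Iel_def)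
lemma Iel_nrmE: "Iel (nrmE x) = Iel x" by (simp add: Iel_def nrmE_def evL_nrm)

lemmas mE = mulE_ok[OF disjI1] mulE_ok[OF disjI2]

lemma Iel_trip0: "snd B = [] \<Longrightarrow> snd C = [] \<Longrightarrow> Iel (tripE A B C) = trip sc mu (Iel A) (Iel B) (Iel C)"
  by (simp add: tripE_def trip_def mE)
lemma Iel_trip1: "snd A = [] \<Longrightarrow> snd C = [] \<Longrightarrow> Iel (tripE A B C) = trip sc mu (Iel A) (Iel B) (Iel C)"
  by (simp add: tripE_def trip_def mE)
lemma Iel_trip2: "snd A = [] \<Longrightarrow> snd B = [] \<Longrightarrow> Iel (tripE A B C) = trip sc mu (Iel A) (Iel B) (Iel C)"
  by (simp add: tripE_def trip_def mE)
lemmas Iel_trip = Iel_trip0 Iel_trip1 Iel_trip2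

lemma rw_zero: "Iel x = 0 \<Longrightarrow> Iel (rw x w) = 0"
proof (induction w arbitrary: x rule: rev_induct)
  case Nil then show ?case by (simp add: rw_def)
next
  case (snoc a w) then show ?case by (simp add: rw_def mE)
qed
lemma rw_one: "Iel (rw x [d]) = mu (Iel x) (Iel (Lb d))" by (simp add: rw_def mE)

lemma mal0: "snd B = [] \<Longrightarrow> snd C = [] \<Longrightarrow> snd D = [] \<Longrightarrow> Iel (malE A B C D) = 0"
  by (simp add: malE_def mE mal[of "Iel A" "Iel C"])
lemma mal1: "snd A = [] \<Longrightarrow> snd C = [] \<Longrightarrow> snd D = [] \<Longrightarrow> Iel (malE A B C D) = 0"
  by (simp add: malE_def mE mal[of "Iel A" "Iel C"])
lemma mal2: "snd A = [] \<Longrightarrow> snd B = [] \<Longrightarrow> snd D = [] \<Longrightarrow> Iel (malE A B C D) = 0"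
  by (simp add: malE_def mE mal[of "Iel A" "Iel C"])
lemma mal3: "snd A = [] \<Longrightarrow> snd B = [] \<Longrightarrow> snd C = [] \<Longrightarrow> Iel (malE A B C D) = 0"
  by (simp add: malE_def mE mal[of "Iel A" "Iel C"])

lemma h0: "snd B = [] \<Longrightarrow> snd C = [] \<Longrightarrow> snd D = [] \<Longrightarrow> snd G = [] \<Longrightarrow> Iel (hE A B C D G) = 0"
  using hz[of "Iel A" "Iel B" "Iel C" "Iel D" "Iel G"] by (simp add: hE_def hpoly_def mE Iel_trip add.assoc)
lemma h1: "snd A = [] \<Longrightarrow> snd C = [] \<Longrightarrow> snd D = [] \<Longrightarrow> snd G = [] \<Longrightarrow> Iel (hE A B C D G) = 0"
  using hz[of "Iel A" "Iel B" "Iel C" "Iel D" "Iel G"] by (simp add: hE_def hpoly_def mE Iel_trip add.assoc)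
lemma h2: "snd A = [] \<Longrightarrow> snd B = [] \<Longrightarrow> snd D = [] \<Longrightarrow> snd G = [] \<Longrightarrow> Iel (hE A B C D G) = 0"
  using hz[of "Iel A" "Iel B" "Iel C" "Iel D" "Iel G"] by (simp add: hE_def hpoly_def mE Iel_trip add.assoc)
lemma h3: "snd A = [] \<Longrightarrow> snd B = [] \<Longrightarrow> snd C = [] \<Longrightarrow> snd G = [] \<Longrightarrow> Iel (hE A B C D G) = 0"
  using hz[of "Iel A" "Iel B" "Iel C" "Iel D" "Iel G"] by (simp add: hE_def hpoly_def mE Iel_trip add.assoc)
lemma h4: "snd A = [] \<Longrightarrow> snd B = [] \<Longrightarrow> snd C = [] \<Longrightarrow> snd D = [] \<Longrightarrow> Iel (hE A B C D G) = 0"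
  using hz[of "Iel A" "Iel B" "Iel C" "Iel D" "Iel G"] by (simp add: hE_def hpoly_def mE Iel_trip add.assoc)

lemma p1: "snd A = [] \<Longrightarrow> snd C = [] \<Longrightarrow> snd D = [] \<Longrightarrow> Iel (pE A B C D) = ppoly sc mu (Iel A) (Iel B) (Iel C) (Iel D)"
  by (simp add: pE_def ppoly_def mE Iel_trip)
lemma jac0: "snd B = [] \<Longrightarrow> snd C = [] \<Longrightarrow> Iel (jacE A B C) = jac mu (Iel A) (Iel B) (Iel C)"
  by (simp add: jacE_def jac_def mE)

end


definition sumE :: "(int \<times> el) list \<Rightarrow> el" where
  "sumE xs = foldr (\<lambda>(k,e) acc. addE (smE k e) acc) xs ((0,0,0),[])"

definition X6 :: el where "X6 = addE (smE (-5) (pE (Lb 2) (Mw []) (Lb 3) (Lb 1))) (addE (smE (-1) (pE (Lb 3) (Mw []) (Lb 1) (Lb 2))) (addE (smE (-4) (pE (Lb 2) (Mw []) (Lb 1) (Lb 3))) (addE (smE (1) (pE (Lb 1) (Mw []) (Lb 2) (Lb 3))) (smE (2) (pE (Lb 1) (Mw []) (Lb 3) (Lb 2))))))"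

definition rels1 :: "(int \<times> el) list" where "rels1 = [
   (1, rw (hE (Mw []) (Lb 1) (Lb 1) (Lb 2) (Lb 3)) []),
   (-10, rw (malE (Mw []) (Lb 1) (Lb 1) (Lb 3)) []),
   (-2, rw (malE (Mw [3]) (Lb 1) (Lb 2) (Lb 1)) []),
   (12, rw (malE (Mw []) (Lb 1) (Lb 2) (Lb 2)) []),
   (-4, rw (malE (Mw []) (Lb 1) (Lb 2) (Lb 1)) [3]),
   (6, rw (malE (Mw [3]) (Lb 1) (Lb 1) (Lb 2)) []),
   (10, rw (malE (Mw []) (Lb 1) (Lb 3) (Lb 1)) [2]),
   (4, rw (malE (Mw [2]) (Lb 1) (Lb 1) (Lb 3)) []),
   (12, rw (malE (Mw [2]) (Lb 1) (Lb 3) (Lb 1)) []),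
   (14, rw (malE (Mw []) (Lb 2) (Lb 1) (Lb 2)) []),
   (-2, rw (jacE (Mw []) (Lb 1) (Lb 2)) []),
   (-6, rw (malE (Mw []) (Lb 1) (Lb 3) (Lb 1)) []),
   (-3, rw (hE (Mw []) (Lb 1) (Lb 2) (Lb 1) (Lb 3)) []),
   (8, rw (malE (Mw []) (Lb 1) (Lb 3) (Lb 2)) [1]),
   (-8, rw (malE (Mw []) (Lb 1) (Lb 2) (Lb 3)) [1]),
   (8, rw (malE (Mw []) (Lb 1) (Lb 1) (Lb 3)) [2]),
   (8, rw (malE (Mw [1]) (Lb 1) (Lb 2) (Lb 3)) []),
   (-8, rw (malE (Mw []) (Lb 1) (Lb 1) (Lb 2)) [3])]"

definition rels2 :: "(int \<times> el) list" where "rels2 = [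
   (-4, rw (malE (Mw []) (Lb 1) (Lb 3) (Lb 2)) []),
   (6, rw (malE (Mw []) (Lb 2) (Lb 1) (Lb 3)) [2]),
   (6, rw (malE (Mw []) (Lb 1) (Lb 3) (Lb 2)) [2]),
   (-6, rw (malE (Mw []) (Lb 1) (Lb 2) (Lb 3)) [2]),
   (1, rw (hE (Mw []) (Lb 1) (Lb 1) (Lb 3) (Lb 3)) []),
   (-2, rw (malE (Mw []) (Lb 1) (Lb 3) (Lb 1)) [3]),
   (4, rw (malE (Mw []) (Lb 1) (Lb 2) (Lb 3)) []),
   (-2, rw (malE (Mw [3]) (Lb 1) (Lb 2) (Lb 2)) []),
   (2, rw (malE (Mw [3]) (Lb 1) (Lb 3) (Lb 1)) []),
   (2, rw (malE (Mw [3]) (Lb 1) (Lb 1) (Lb 3)) []),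
   (-2, rw (malE (Mw []) (Lb 2) (Lb 1) (Lb 3)) []),
   (-2, rw (malE (Mw []) (Lb 2) (Lb 1) (Lb 2)) [3]),
   (2, rw (malE (Mw [2]) (Lb 1) (Lb 2) (Lb 3)) []),
   (2, rw (malE (Mw []) (Lb 2) (Lb 3) (Lb 1)) []),
   (2, rw (malE (Mw [2]) (Lb 1) (Lb 3) (Lb 2)) []),
   (-2, rw (jacE (Mw []) (Lb 1) (Lb 3)) []),
   (-1, rw (hE (Mw []) (Lb 1) (Lb 2) (Lb 2) (Lb 3)) [])]"

definition rels3 :: "(int \<times> el) list" where "rels3 = [
   (4, rw (malE (Mw []) (Lb 1) (Lb 3) (Lb 3)) []),
   (-6, rw (malE (Mw []) (Lb 2) (Lb 2) (Lb 3)) []),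
   (-2, rw (malE (Mw []) (Lb 3) (Lb 1) (Lb 3)) []),
   (1, rw (hE (Mw []) (Lb 1) (Lb 2) (Lb 3) (Lb 3)) []),
   (2, rw (malE (Mw [3]) (Lb 1) (Lb 3) (Lb 2)) []),
   (2, rw (malE (Mw [3]) (Lb 1) (Lb 2) (Lb 3)) []),
   (-3, rw (hE (Mw []) (Lb 1) (Lb 3) (Lb 2) (Lb 3)) []),
   (2, rw (jacE (Mw []) (Lb 1) (Lb 3)) [3])]"

definition tgt :: "nat \<Rightarrow> el" where
  "tgt d = rw (addE (smE 6 (Mw [])) (smE (-1) X6)) [d]"

lemma chk5_1: "nrmE (addE (tgt 1) (smE (-1) (sumE rels1))) = ((0,0,0),[])" by code_simp
lemma chk5_2: "nrmE (addE (tgt 2) (smE (-1) (sumE rels2))) = ((0,0,0),[])" by code_simp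
lemma chk5_3: "nrmE (addE (tgt 3) (smE (-1) (sumE rels3))) = ((0,0,0),[])" by code_simp


context sl2c
begin

lemma Iel_sumE_zero: "(\<forall>p\<in>set xs. Iel (snd p) = 0) \<Longrightarrow> Iel (sumE xs) = 0"
proof (induction xs)
  case Nil then show ?case by (simp add: sumE_def)
next
  case (Cons p xs)
  obtain k e where p: "p = (k,e)" by (cases p)
  have "Iel (smE k e) = 0" using Cons.prems p by (simp del: smE.simps)
  then show ?case using Cons p by (simp add: sumE_def del: smE.simps)
qed

lemma X6_val: "Iel X6 = sc (of_int (2)) (ppoly sc mu (\<rho> 1) (\<rho> 0) (\<rho> 3) (\<rho> 2)) + sc (of_int (1)) (ppoly sc mu (\<rho> 1) (\<rho> 0) (\<rho> 2) (\<rho> 3)) + sc (of_int (-4)) (ppoly sc mu (\<rho> 2) (\<rho> 0) (\<rho> 1) (\<rho> 3)) + sc (of_int (-1)) (ppoly sc mu (\<rho> 3) (\<rho> 0) (\<rho> 1) (\<rho> 2)) + sc (of_int (-5)) (ppoly sc mu (\<rho> 2) (\<rho> 0) (\<rho> 3) (\<rho> 1))"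
  by (simp add: X6_def p1 del: Lb.simps)

lemma tgt_val: "Iel (tgt d) = mu (sc 6 (\<rho> 0) - Iel X6) (Iel (Lb d))"
  by (simp add: tgt_def rw_one del: Lb.simps)

lemma from_chk: "nrmE (addE (tgt d) (smE (-1) (sumE xs))) = ((0,0,0),[]) \<Longrightarrow> Iel (sumE xs) = 0 \<Longrightarrow> Iel (tgt d) = 0"
  by (metis Iel_nrmE Iel_addE Iel_smE Iel_zero V.scale_zero_right add_0_right)

lemma core:
  assumes J: "\<And>a b. a \<in> {1,2,3} \<Longrightarrow> b \<in> {1,2,3} \<Longrightarrow> jac mu (\<rho> 0) (\<rho> a) (\<rho> b) = 0"
  shows "mu (sc 6 (\<rho> 0) - Iel X6) (\<rho> 1) = 0" "mu (sc 6 (\<rho> 0) - Iel X6) (\<rho> 2) = 0"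
    "mu (sc 6 (\<rho> 0) - Iel X6) (\<rho> 3) = 0"
proof -
  have J': "\<And>a b. a \<in> {1,2,3} \<Longrightarrow> b \<in> {1,2,3} \<Longrightarrow> Iel (jacE (Mw []) (Lb a) (Lb b)) = 0"
  proof -
    fix a b :: nat assume a: "a \<in> {1,2,3}" and b: "b \<in> {1,2,3}"
    have "Iel (Lb a) = \<rho> a" using a by (auto simp del: Lb.simps)
    moreover have "Iel (Lb b) = \<rho> b" using b by (auto simp del: Lb.simps)
    ultimately show "Iel (jacE (Mw []) (Lb a) (Lb b)) = 0" using J[OF a b] by (simp add: jac0 del: Lb.simps)
  qed
  have r1: "Iel (sumE rels1) = 0"
    by (rule Iel_sumE_zero) (simp add: rels1_def rw_zero mal0 mal1 mal2 mal3 h0 h1 h2 h3 h4 J' del: Lb.simps)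
  have r2: "Iel (sumE rels2) = 0"
    by (rule Iel_sumE_zero) (simp add: rels2_def rw_zero mal0 mal1 mal2 mal3 h0 h1 h2 h3 h4 J' del: Lb.simps)
  have r3: "Iel (sumE rels3) = 0"
    by (rule Iel_sumE_zero) (simp add: rels3_def rw_zero mal0 mal1 mal2 mal3 h0 h1 h2 h3 h4 J' del: Lb.simps)
  show "mu (sc 6 (\<rho> 0) - Iel X6) (\<rho> 1) = 0" using from_chk[OF chk5_1 r1] tgt_val[of 1] by (simp del: Lb.simps)
  show "mu (sc 6 (\<rho> 0) - Iel X6) (\<rho> 2) = 0" using from_chk[OF chk5_2 r2] tgt_val[of 2] by (simp del: Lb.simps)
  show "mu (sc 6 (\<rho> 0) - Iel X6) (\<rho> 3) = 0" using from_chk[OF chk5_3 r3] tgt_val[of 3] by (simp del: Lb.simps)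
qed

end


context malcH
begin

lemma op_scale_module: "module (op_scale sc)"
  unfolding module_def op_scale_def
  by (auto simp: fun_eq_iff V.scale_right_distrib V.scale_left_distrib)

lemma ppoly_add1: "ppoly sc mu (x1 + x2) y z t = ppoly sc mu x1 y z t + ppoly sc mu x2 y z t"
  by (simp add: ppoly_def trip_def addL addR V.scale_right_distrib algebra_simps)
lemma ppoly_sc1: "ppoly sc mu (sc c x) y z t = sc c (ppoly sc mu x y z t)"
  by (simp add: ppoly_def trip_def scL scR V.scale_right_distrib V.scale_right_diff_distrib V.scale_left_commute[of 2 c] mult.commute)

lemma alpha_cent: "alpha_op sc mu y z t \<in> centroid sc mu"
proof -
  let ?a = "alpha_op sc mu y z t"
  have lin: "Vector_Spaces.linear sc sc ?a"
    by (simp add: Vector_Spaces.linear_iff vs alpha_op_def ppoly_add1 ppoly_sc1)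
  have neg: "?a (- w) = - ?a w" for w
    by (simp add: alpha_op_def ppoly_sc1[of "-1", simplified])
  have m1: "?a (mu x u) = mu x (?a u)" for x u by (simp add: alpha_op_def cent_mulL)
  have m2: "?a (mu x u) = mu (?a x) u" for x u
  proof -
    have "?a (mu x u) = ?a (- mu u x)" by (simp flip: anti)
    also have "\<dots> = - mu u (?a x)" by (simp add: neg m1)
    also have "\<dots> = mu (?a x) u" by (simp flip: anti)
    finally show ?thesis .
  qed
  show ?thesis unfolding centroid_def using lin m1 m2 by blast
qed

lemma cent_lin: "\<delta> \<in> centroid sc mu \<Longrightarrow> Vector_Spaces.linear sc sc \<delta>"
  by (simp add: centroid_def)
lemma cent_add: "\<delta> \<in> centroid sc mu \<Longrightarrow> \<delta> (a + b) = \<delta> a + \<delta> b"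
  by (simp add: centroid_def Vector_Spaces.linear_iff)
lemma cent_sc: "\<delta> \<in> centroid sc mu \<Longrightarrow> \<delta> (sc c a) = sc c (\<delta> a)"
  by (simp add: centroid_def Vector_Spaces.linear_iff)
lemma cent_neg: "\<delta> \<in> centroid sc mu \<Longrightarrow> \<delta> (- a) = - \<delta> a"
  by (metis cent_lin Vector_Spaces.linear_def module_hom.neg)
lemma cent_diff: "\<delta> \<in> centroid sc mu \<Longrightarrow> \<delta> (a - b) = \<delta> a - \<delta> b"
  by (metis cent_lin Vector_Spaces.linear_def module_hom.diff)
lemma cent_zero: "\<delta> \<in> centroid sc mu \<Longrightarrow> \<delta> 0 = 0"
  by (metis cent_lin Vector_Spaces.linear_def module_hom.zero)
lemma cent_mR: "\<delta> \<in> centroid sc mu \<Longrightarrow> mu a (\<delta> b) = \<delta> (mu a b)"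
  unfolding centroid_def by (metis (mono_tags, lifting) mem_Collect_eq)
lemma cent_mL: "\<delta> \<in> centroid sc mu \<Longrightarrow> mu (\<delta> a) b = \<delta> (mu a b)"
  unfolding centroid_def by (metis (mono_tags, lifting) mem_Collect_eq)

lemma ppoly_cent2: "\<delta> \<in> centroid sc mu \<Longrightarrow> ppoly sc mu x (\<delta> y) z t = \<delta> (ppoly sc mu x y z t)"
  by (simp add: ppoly_def trip_def cent_mR cent_mL cent_add cent_sc cent_neg cent_diff)
lemma ppoly_cent1: "\<delta> \<in> centroid sc mu \<Longrightarrow> ppoly sc mu (\<delta> x) y z t = \<delta> (ppoly sc mu x y z t)"
  by (simp add: ppoly_def trip_def cent_mR cent_mL cent_add cent_sc cent_neg cent_diff)

lemma cent_subspace: "module.subspace (op_scale sc) (centroid sc mu)"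
proof -
  interpret O: module "op_scale sc" by (rule op_scale_module)
  show ?thesis
    unfolding O.subspace_def
  proof (intro conjI ballI allI)
    show "0 \<in> centroid sc mu" by (simp add: centroid_def Vector_Spaces.linear_iff vs)
  next
    fix x y assume x: "x \<in> centroid sc mu" and y: "y \<in> centroid sc mu"
    have l: "Vector_Spaces.linear sc sc (x + y)"
      using x y by (simp add: Vector_Spaces.linear_iff vs cent_add cent_sc V.scale_right_distrib algebra_simps)
    show "x + y \<in> centroid sc mu"
      unfolding centroid_def using l by (simp add: addL addR cent_mR[OF x] cent_mL[OF x] cent_mR[OF y] cent_mL[OF y])
  next
    fix c x assume x: "x \<in> centroid sc mu"
    have l: "Vector_Spaces.linear sc sc (op_scale sc c x)"
      using x by (simp add: Vector_Spaces.linear_iff vs op_scale_def cent_add cent_sc V.scale_right_distrib V.scale_left_commute)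
    show "op_scale sc c x \<in> centroid sc mu"
      unfolding centroid_def using l by (simp add: op_scale_def scL scR cent_mR[OF x] cent_mL[OF x])
  qed
qed

end

context malcH begin
sublocale O: module "op_scale sc" by (rule op_scale_module)

lemma U_cent: "O.span {alpha_op sc mu m a b | m a b. a \<in> LL \<and> b \<in> LL} \<subseteq> centroid sc mu"
  by (rule O.span_minimal) (auto simp: cent_subspace alpha_cent)

lemma gen_comp: "\<delta> \<in> centroid sc mu \<Longrightarrow> \<delta> \<circ> alpha_op sc mu y z t = alpha_op sc mu (\<delta> y) z t
   \<and> alpha_op sc mu y z t \<circ> \<delta> = alpha_op sc mu (\<delta> y) z t"
  by (simp add: fun_eq_iff alpha_op_def ppoly_cent1 ppoly_cent2)

lemma U_comp:
  assumes d: "\<delta> \<in> centroid sc mu" and u: "u \<in> O.span {alpha_op sc mu m a b | m a b. a \<in> LL \<and> b \<in> LL}"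
  shows "\<delta> \<circ> u \<in> O.span {alpha_op sc mu m a b | m a b. a \<in> LL \<and> b \<in> LL} \<and> u \<circ> \<delta> = \<delta> \<circ> u"
  using u
proof (induction rule: O.span_induct_alt)
  case base
  have e1: "\<delta> \<circ> 0 = 0" and e2: "(0::'m\<Rightarrow>'m) \<circ> \<delta> = 0" using cent_zero[OF d] by (auto simp: fun_eq_iff)
  show ?case unfolding e1 e2 by (blast intro: O.span_zero)
next
  case (step c x y)
  from step(1) obtain m a b where x: "x = alpha_op sc mu m a b" and ab: "a \<in> LL" "b \<in> LL" by blast
  have IH: "\<delta> \<circ> y \<in> O.span {alpha_op sc mu m a b | m a b. a \<in> LL \<and> b \<in> LL}" "y \<circ> \<delta> = \<delta> \<circ> y"
    using step(2) by blast+
  have gx: "\<delta> \<circ> x = alpha_op sc mu (\<delta> m) a b" "x \<circ> \<delta> = \<delta> \<circ> x" using gen_comp[OF d] x by auto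
  have g: "\<delta> \<circ> x \<in> O.span {alpha_op sc mu m a b | m a b. a \<in> LL \<and> b \<in> LL}"
    unfolding gx(1) using ab by (blast intro: O.span_base)
  have e1: "\<delta> \<circ> (op_scale sc c x + y) = op_scale sc c (\<delta> \<circ> x) + (\<delta> \<circ> y)"
    using d by (simp add: fun_eq_iff op_scale_def cent_add cent_sc)
  have e2: "(op_scale sc c x + y) \<circ> \<delta> = op_scale sc c (x \<circ> \<delta>) + (y \<circ> \<delta>)"
    by (simp add: fun_eq_iff op_scale_def)
  show ?case unfolding e1 e2 gx(2) IH(2)
    using g IH(1) by (blast intro: O.span_add O.span_scale)
qed
end

locale thmc = malcH sc mu for sc :: "'f::field \<Rightarrow> 'm::ab_group_add \<Rightarrow> 'm" and mu +
  fixes E H F :: 'm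
  assumes two: "(2::'f) \<noteq> 0" and three: "(3::'f) \<noteq> 0"
    and eH: "mu E H = E" and fH: "mu F H = - F" and eF: "mu E F = sc (1/2) H"
    and faithful: "\<And>m. m \<noteq> 0 \<Longrightarrow> \<exists>a\<in>V.span {E,H,F}. mu m a \<noteq> 0"
begin

lemma hE: "mu H E = - E" using anti eH by metis
lemma hF: "mu H F = F" using anti fH by (metis minus_minus)
lemma fE: "mu F E = - sc (1/2) H" using anti eF by metis
lemmas tab = eH fH eF hE hF fE sq0

lemma span_all: "a \<in> V.span {E,H,F} \<Longrightarrow> Q 0 \<Longrightarrow> (\<And>c x y. x \<in> {E,H,F} \<Longrightarrow> Q y \<Longrightarrow> Q (sc c x + y)) \<Longrightarrow> Q a"
  by (induction rule: V.span_induct_alt) auto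

lemma faith0: "mu w E = 0 \<Longrightarrow> mu w H = 0 \<Longrightarrow> mu w F = 0 \<Longrightarrow> w = 0"
proof (rule ccontr)
  assume a: "mu w E = 0" "mu w H = 0" "mu w F = 0" "w \<noteq> 0"
  then obtain b where b: "b \<in> V.span {E,H,F}" "mu w b \<noteq> 0" using faithful by blast
  have "mu w b = 0" using b(1) by (rule span_all[where Q="\<lambda>b. mu w b = 0"]) (use a in \<open>auto simp: addR scR\<close>)
  then show False using b by simp
qed

lemma jac_add2: "jac mu x (y1 + y2) z = jac mu x y1 z + jac mu x y2 z"
  by (simp add: jac_def addL addR algebra_simps)
lemma jac_sc2: "jac mu x (sc c y) z = sc c (jac mu x y z)"
  by (simp add: jac_def scL scR V.scale_right_distrib)
lemma jac_add3: "jac mu x y (z1 + z2) = jac mu x y z1 + jac mu x y z2"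
  by (simp add: jac_def addL addR algebra_simps)
lemma jac_sc3: "jac mu x y (sc c z) = sc c (jac mu x y z)"
  by (simp add: jac_def scL scR V.scale_right_distrib)
lemma jac_add1: "jac mu (x1 + x2) y z = jac mu x1 y z + jac mu x2 y z"
  by (simp add: jac_def addL addR algebra_simps)

lemma jz: "jac mu x y 0 = 0" "jac mu x 0 z = 0" by (simp_all add: jac_def)

lemma jac_basis: "x \<in> {E,H,F} \<Longrightarrow> y \<in> {E,H,F} \<Longrightarrow> z \<in> {E,H,F} \<Longrightarrow> jac mu x y z = 0"
  by (auto simp: jac_def tab scL scR)

lemma jacL: "x \<in> {E,H,F} \<Longrightarrow> a \<in> V.span {E,H,F} \<Longrightarrow> b \<in> V.span {E,H,F} \<Longrightarrow> jac mu x a b = 0"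
proof -
  assume x: "x \<in> {E,H,F}" and a: "a \<in> V.span {E,H,F}" and b: "b \<in> V.span {E,H,F}"
  have b1: "jac mu x y b = 0" if y: "y \<in> {E,H,F}" for y
    using b by (rule span_all[where Q="\<lambda>b. jac mu x y b = 0"]) (use x y in \<open>auto simp: jac_add3 jac_sc3 jac_basis jz\<close>)
  show ?thesis
    using a by (rule span_all[where Q="\<lambda>a. jac mu x a b = 0"]) (auto simp: jac_add2 jac_sc2 b1 jz)
qed

end


context thmc begin

lemma six: "(6::'f) \<noteq> 0"
proof -
  have "(2::'f) * 3 \<noteq> 0" using two three by (simp only: mult_eq_0_iff) simp
  moreover have "(2::'f) * 3 = 6" by simp
  ultimately show ?thesis by metis
qed

lemma H_eq: "H = sc 2 (mu E F)" using two by (simp add: eF)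
lemma F_eq: "F = - mu F H" by (simp add: fH)

lemma kill0: "\<delta> \<in> centroid sc mu \<Longrightarrow> \<delta> E = 0 \<Longrightarrow> \<delta> H = 0 \<Longrightarrow> \<delta> F = 0 \<Longrightarrow> \<delta> = 0"
proof (rule ext)
  fix m assume d: "\<delta> \<in> centroid sc mu" and z: "\<delta> E = 0" "\<delta> H = 0" "\<delta> F = 0"
  have "mu (\<delta> m) x = 0" if "x \<in> {E,H,F}" for x
    using that z by (auto simp: cent_mL[OF d] simp flip: cent_mR[OF d])
  then show "\<delta> m = 0 m" by (simp add: faith0)
qed

lemma killE: "\<delta> \<in> centroid sc mu \<Longrightarrow> \<delta> E = 0 \<Longrightarrow> \<delta> = 0"
proof -
  assume d: "\<delta> \<in> centroid sc mu" and z: "\<delta> E = 0"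
  have h: "\<delta> H = 0" by (subst H_eq) (simp add: cent_sc[OF d] z flip: cent_mL[OF d])
  have f: "\<delta> F = 0" by (subst F_eq) (simp add: cent_neg[OF d] h flip: cent_mR[OF d])
  show ?thesis using kill0[OF d z h f] .
qed
lemma killH: "\<delta> \<in> centroid sc mu \<Longrightarrow> \<delta> H = 0 \<Longrightarrow> \<delta> = 0"
proof -
  assume d: "\<delta> \<in> centroid sc mu" and z: "\<delta> H = 0"
  have "\<delta> E = \<delta> (mu E H)" by (simp add: eH)
  also have "\<dots> = 0" by (simp add: z flip: cent_mR[OF d])
  finally show ?thesis using killE[OF d] by simp
qed
lemma killF: "\<delta> \<in> centroid sc mu \<Longrightarrow> \<delta> F = 0 \<Longrightarrow> \<delta> = 0"
proof -
  assume d: "\<delta> \<in> centroid sc mu" and z: "\<delta> F = 0"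
  have h: "\<delta> H = 0" by (subst H_eq) (simp add: cent_sc[OF d] z flip: cent_mR[OF d])
  show ?thesis using killH[OF d h] .
qed

lemma indep:
  assumes d1: "\<delta>1 \<in> centroid sc mu" and d2: "\<delta>2 \<in> centroid sc mu" and d3: "\<delta>3 \<in> centroid sc mu"
    and s: "\<delta>1 E + \<delta>2 H + \<delta>3 F = 0"
  shows "\<delta>1 = 0 \<and> \<delta>2 = 0 \<and> \<delta>3 = 0"
proof -
  let ?x = "\<delta>1 E" and ?y = "\<delta>2 H" and ?z = "\<delta>3 F"
  have mx: "mu ?x H = ?x" by (simp add: cent_mL[OF d1] eH)
  have my: "mu ?y H = 0" by (simp add: cent_mL[OF d2] sq0 cent_zero[OF d2])
  have mz: "mu ?z H = - ?z" by (simp add: cent_mL[OF d3] fH cent_neg[OF d3])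
  have "mu (?x + ?y + ?z) H = 0" using s by simp
  then have a: "?x - ?z = 0" by (simp add: addL mx my mz)
  have "mu (?x - ?z) H = 0" using a by simp
  then have b: "?x + ?z = 0" by (simp add: mx mz)
  have xz: "?x = ?z" using a by simp
  then have "sc 2 ?x = 0" using b by (simp add: V.scale_left_distrib[of 1 1, simplified])
  then have x0: "?x = 0" using two by simp
  then have z0: "?z = 0" using xz by simp
  have y0: "?y = 0" using s x0 z0 by simp
  show ?thesis using killE[OF d1 x0] killH[OF d2 y0] killF[OF d3 z0] by simp
qed

lemma jac_cent: "\<delta> \<in> centroid sc mu \<Longrightarrow> jac mu (\<delta> e) a b = \<delta> (jac mu e a b)"
  by (simp add: jac_def cent_add cent_mL cent_mR)

end


context thmc begin

lemma inL: "E \<in> V.span {E,H,F}" "H \<in> V.span {E,H,F}" "F \<in> V.span {E,H,F}" "sc 2 E \<in> V.span {E,H,F}"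
  by (auto intro: V.span_base V.span_scale)

lemma surjN:
  assumes J: "\<forall>a\<in>V.span {E,H,F}. \<forall>b\<in>V.span {E,H,F}. jac mu n a b = 0"
  shows "\<exists>aE aH aF. aE \<in> O.span {alpha_op sc mu m a b | m a b. a \<in> V.span {E,H,F} \<and> b \<in> V.span {E,H,F}}
     \<and> aH \<in> O.span {alpha_op sc mu m a b | m a b. a \<in> V.span {E,H,F} \<and> b \<in> V.span {E,H,F}}
     \<and> aF \<in> O.span {alpha_op sc mu m a b | m a b. a \<in> V.span {E,H,F} \<and> b \<in> V.span {E,H,F}}
     \<and> n = aE E + aH H + aF F"
proof -
  define \<rho> where "\<rho> = (\<lambda>i::nat. if i = 0 then n else if i = 1 then sc 2 E else if i = 2 then H else F)"
  have r: "\<rho> 0 = n" "\<rho> 1 = sc 2 E" "\<rho> 2 = H" "\<rho> 3 = F" "\<rho> (Suc 0) = sc 2 E" by (simp_all add: \<rho>_def)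
  have S: "sl2c sc mu \<rho>"
  proof unfold_locales
    show "mu (\<rho> 1) (\<rho> 2) = \<rho> 1" by (simp add: r scL eH)
    show "mu (\<rho> 3) (\<rho> 2) = - \<rho> 3" by (simp add: r fH)
    show "mu (\<rho> 1) (\<rho> 3) = \<rho> 2" using two by (simp add: r scL eF)
  qed
  have JJ: "jac mu (\<rho> 0) (\<rho> a) (\<rho> b) = 0" if "a \<in> {1,2,3}" "b \<in> {1,2,3}" for a b
  proof -
    have "\<rho> a \<in> V.span {E,H,F}" "\<rho> b \<in> V.span {E,H,F}" using that inL by (auto simp: r)
    then show ?thesis using J by (simp add: r)
  qed
  note C = sl2c.core[OF S JJ]
  note X = sl2c.X6_val[OF S]
  define XS where "XS = sl2c.Iel sc mu \<rho> X6"
  have w0: "sc 6 n - XS = 0"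
  proof (rule faith0)
    have "mu (sc 6 n - XS) (sc 2 E) = 0" using C(1) by (simp add: XS_def r)
    then show "mu (sc 6 n - XS) E = 0" using two by (simp add: scR)
    show "mu (sc 6 n - XS) H = 0" using C(2) by (simp add: XS_def r)
    show "mu (sc 6 n - XS) F = 0" using C(3) by (simp add: XS_def r)
  qed
  define v1 where "v1 = ppoly sc mu E n F H"
  define v2 where "v2 = ppoly sc mu E n H F"
  define v3 where "v3 = ppoly sc mu H n (sc 2 E) F"
  define v4 where "v4 = ppoly sc mu F n (sc 2 E) H"
  define v5 where "v5 = ppoly sc mu H n F (sc 2 E)"
  define aE where "aE = op_scale sc (1/6) (op_scale sc 4 (alpha_op sc mu n F H) + op_scale sc 2 (alpha_op sc mu n H F))"
  define aH where "aH = op_scale sc (1/6) (op_scale sc (-4) (alpha_op sc mu n (sc 2 E) F) + op_scale sc (-5) (alpha_op sc mu n F (sc 2 E)))"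
  define aF where "aF = op_scale sc (1/6) (op_scale sc (-1) (alpha_op sc mu n (sc 2 E) H))"
  let ?U = "O.span {alpha_op sc mu m a b | m a b. a \<in> V.span {E,H,F} \<and> b \<in> V.span {E,H,F}}"
  have gen: "alpha_op sc mu n a b \<in> ?U" if "a \<in> V.span {E,H,F}" "b \<in> V.span {E,H,F}" for a b
    using that by (blast intro: O.span_base)
  have mem: "aE \<in> ?U" "aH \<in> ?U" "aF \<in> ?U"
    unfolding aE_def aH_def aF_def by (intro O.span_add O.span_scale gen inL)+
  have e6: "XS = sc 6 n" using w0 by simp
  have n6: "n = sc (1/6) XS" unfolding e6 using six by simp
  have XSv: "XS = sc (of_int 2) (ppoly sc mu (sc 2 E) n F H) + sc (of_int 1) (ppoly sc mu (sc 2 E) n H F)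
     + sc (of_int (-4)) v3 + sc (of_int (-1)) v4 + sc (of_int (-5)) v5"
    unfolding XS_def X v3_def v4_def v5_def by (simp only: r)
  have XSv2: "XS = sc 4 v1 + sc 2 v2 + sc (-4) v3 + sc (-1) v4 + sc (-5) v5"
    unfolding XSv v1_def v2_def by (simp only: ppoly_sc1 V.scale_scale of_int_numeral of_int_minus of_int_1 mult_1 mult_numeral_1) simp
  have hE: "aE E = sc (1/6) (sc 4 v1 + sc 2 v2)"
    by (simp only: aE_def op_scale_def alpha_op_def plus_fun_apply v1_def v2_def)
  have hH: "aH H = sc (1/6) (sc (-4) v3 + sc (-5) v5)"
    by (simp only: aH_def op_scale_def alpha_op_def plus_fun_apply v3_def v5_def)
  have hF: "aF F = sc (1/6) (sc (-1) v4)"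
    by (simp only: aF_def op_scale_def alpha_op_def v4_def)
  have "aE E + aH H + aF F = sc (1/6) (sc 4 v1 + sc 2 v2 + (sc (-4) v3 + sc (-5) v5) + sc (-1) v4)"
    by (simp only: hE hH hF V.scale_right_distrib)
  also have "\<dots> = sc (1/6) XS"
    unfolding XSv2 by (simp only: add.assoc add.commute add.left_commute)
  finally have "n = aE E + aH H + aF F" using n6 by simp
  then show ?thesis using mem by blast
qed

end

theorem propositionc1:
  fixes sc :: "'f::field \<Rightarrow> 'm::ab_group_add \<Rightarrow> 'm"
    and mu :: "'m \<Rightarrow> 'm \<Rightarrow> 'm"
    and E H F :: 'm
  assumes char2: "(2::'f) \<noteq> 0" and char3: "(3::'f) \<noteq> 0"
    and HM: "in_H sc mu"
    and sl2: "sl2_triple sc mu E H F"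
    and faithful: "\<And>m. m \<noteq> 0 \<Longrightarrow> \<exists>a\<in>sl2_span sc E H F. mu m a \<noteq> 0"
  shows
    \<comment> \<open>U is a commutative associative subalgebra of the centroid (product = composition)\<close>
    "U_ops sc mu (sl2_span sc E H F) \<subseteq> centroid sc mu
     \<and> (\<forall>\<alpha>\<in>U_ops sc mu (sl2_span sc E H F). \<forall>\<beta>\<in>U_ops sc mu (sl2_span sc E H F).
          \<beta> \<circ> \<alpha> \<in> U_ops sc mu (sl2_span sc E H F) \<and> \<beta> \<circ> \<alpha> = \<alpha> \<circ> \<beta>)
     \<and> (\<forall>\<alpha>\<in>U_ops sc mu (sl2_span sc E H F). \<forall>\<beta>\<in>U_ops sc mu (sl2_span sc E H F).
        \<forall>\<gamma>\<in>U_ops sc mu (sl2_span sc E H F). \<gamma> \<circ> (\<beta> \<circ> \<alpha>) = (\<gamma> \<circ> \<beta>) \<circ> \<alpha>)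
     \<comment> \<open>the map L \<otimes> U \<rightarrow> N_M, written in the coordinates E\<otimes>\<alpha> + H\<otimes>\<beta> + F\<otimes>\<gamma>, is bijective\<close>
     \<and> bij_betw (\<lambda>(\<alpha>, \<beta>, \<gamma>). \<alpha> E + \<beta> H + \<gamma> F)
          (U_ops sc mu (sl2_span sc E H F) \<times> U_ops sc mu (sl2_span sc E H F) \<times> U_ops sc mu (sl2_span sc E H F))
          (N_M sc mu (sl2_span sc E H F))
     \<comment> \<open>and multiplicative on pure tensors: (a\<alpha>)(b\<beta>) = (ab)(\<alpha>\<beta>)\<close>
     \<and> (\<forall>a\<in>sl2_span sc E H F. \<forall>b\<in>sl2_span sc E H F.
          \<forall>\<alpha>\<in>U_ops sc mu (sl2_span sc E H F). \<forall>\<beta>\<in>U_ops sc mu (sl2_span sc E H F).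
            mu (\<alpha> a) (\<beta> b) = (\<beta> \<circ> \<alpha>) (mu a b))"

proof -
  from HM have vs: "vector_space sc" and bil: "bilinear_prod sc mu" and sq: "\<And>x. mu x x = 0"
    and ml: "\<And>x y z t. mu (mu x z) (mu y t) =
        mu (mu (mu x y) z) t + mu (mu (mu y z) t) x + mu (mu (mu z t) x) y + mu (mu (mu t x) y) z"
    and hz: "\<And>y z t x u. hpoly sc mu y z t x u = 0"
    unfolding in_H_def malcev_algebra_def by blast+
  from sl2 have eH: "mu E H = E" and fH: "mu F H = - F" and eF: "mu E F = sc (1/2) H"
    unfolding sl2_triple_def by blast+
  interpret T: thmc sc mu E H F
    by unfold_locales (use vs bil sq ml hz eH fH eF char2 char3 faithful in \<open>simp_all add: bilinear_prod_def sl2_span_def vector_space_def\<close>)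
  let ?L = "sl2_span sc E H F"
  let ?G = "{alpha_op sc mu m a b | m a b. a \<in> ?L \<and> b \<in> ?L}"
  have U: "U_ops sc mu ?L = T.O.span ?G" by (simp add: U_ops_def)
  have Uc: "T.O.span ?G \<subseteq> centroid sc mu" by (rule T.U_cent)
  have L: "?L = T.V.span {E,H,F}" by (simp add: sl2_span_def)
  have comp: "\<forall>\<alpha>\<in>T.O.span ?G. \<forall>\<beta>\<in>T.O.span ?G. \<beta> \<circ> \<alpha> \<in> T.O.span ?G \<and> \<beta> \<circ> \<alpha> = \<alpha> \<circ> \<beta>"
  proof (intro ballI)
    fix \<alpha> \<beta> assume a: "\<alpha> \<in> T.O.span ?G" and b: "\<beta> \<in> T.O.span ?G"
    show "\<beta> \<circ> \<alpha> \<in> T.O.span ?G \<and> \<beta> \<circ> \<alpha> = \<alpha> \<circ> \<beta>"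
      using T.U_comp[OF subsetD[OF Uc b] a] by simp
  qed
  have inj: "inj_on (\<lambda>(\<alpha>, \<beta>, \<gamma>). \<alpha> E + \<beta> H + \<gamma> F) (T.O.span ?G \<times> T.O.span ?G \<times> T.O.span ?G)"
  proof (rule inj_onI)
    fix x y assume xm: "x \<in> T.O.span ?G \<times> T.O.span ?G \<times> T.O.span ?G"
      and ym: "y \<in> T.O.span ?G \<times> T.O.span ?G \<times> T.O.span ?G"
      and e0: "(\<lambda>(\<alpha>, \<beta>, \<gamma>). \<alpha> E + \<beta> H + \<gamma> F) x = (\<lambda>(\<alpha>, \<beta>, \<gamma>). \<alpha> E + \<beta> H + \<gamma> F) y"
    obtain a1 b1 c1 where x: "x = (a1,b1,c1)" by (cases x) auto
    obtain a2 b2 c2 where y: "y = (a2,b2,c2)" by (cases y) auto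
    have m: "a1 \<in> T.O.span ?G" "b1 \<in> T.O.span ?G" "c1 \<in> T.O.span ?G"
      "a2 \<in> T.O.span ?G" "b2 \<in> T.O.span ?G" "c2 \<in> T.O.span ?G" using xm ym x y by auto
    have e: "a1 E + b1 H + c1 F = a2 E + b2 H + c2 F" using e0 x y by simp
    have d: "a1 - a2 \<in> centroid sc mu" "b1 - b2 \<in> centroid sc mu" "c1 - c2 \<in> centroid sc mu"
      using m by (auto intro!: subsetD[OF Uc] T.O.span_diff)
    have "(a1 - a2) E + (b1 - b2) H + (c1 - c2) F = 0" using e by (simp add: algebra_simps)
    then have "a1 - a2 = 0 \<and> b1 - b2 = 0 \<and> c1 - c2 = 0" using T.indep[OF d] by blast
    then show "x = y" using x y by simp
  qed
  have img: "(\<lambda>(\<alpha>, \<beta>, \<gamma>). \<alpha> E + \<beta> H + \<gamma> F) ` (T.O.span ?G \<times> T.O.span ?G \<times> T.O.span ?G) = N_M sc mu ?L"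
  proof
    show "(\<lambda>(\<alpha>, \<beta>, \<gamma>). \<alpha> E + \<beta> H + \<gamma> F) ` (T.O.span ?G \<times> T.O.span ?G \<times> T.O.span ?G) \<subseteq> N_M sc mu ?L"
    proof clarify
      fix a1 b1 c1 assume m: "a1 \<in> T.O.span ?G" "b1 \<in> T.O.span ?G" "c1 \<in> T.O.span ?G"
      have d: "a1 \<in> centroid sc mu" "b1 \<in> centroid sc mu" "c1 \<in> centroid sc mu" using m Uc by auto
      show "a1 E + b1 H + c1 F \<in> N_M sc mu ?L"
        unfolding N_M_def L
        by (auto simp: T.jac_add1 T.jac_cent[OF d(1)] T.jac_cent[OF d(2)] T.jac_cent[OF d(3)] T.jacL
             T.cent_zero[OF d(1)] T.cent_zero[OF d(2)] T.cent_zero[OF d(3)])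
    qed
  next
    show "N_M sc mu ?L \<subseteq> (\<lambda>(\<alpha>, \<beta>, \<gamma>). \<alpha> E + \<beta> H + \<gamma> F) ` (T.O.span ?G \<times> T.O.span ?G \<times> T.O.span ?G)"
    proof
      fix n assume "n \<in> N_M sc mu ?L"
      then have J: "\<forall>a\<in>T.V.span {E,H,F}. \<forall>b\<in>T.V.span {E,H,F}. jac mu n a b = 0"
        unfolding N_M_def L by blast
      from T.surjN[OF J] obtain aE aH aF where
        "aE \<in> T.O.span ?G" "aH \<in> T.O.span ?G" "aF \<in> T.O.span ?G" "n = aE E + aH H + aF F"
        unfolding L by blast
      then show "n \<in> (\<lambda>(\<alpha>, \<beta>, \<gamma>). \<alpha> E + \<beta> H + \<gamma> F) ` (T.O.span ?G \<times> T.O.span ?G \<times> T.O.span ?G)"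
        by (auto intro!: image_eqI[where x="(aE, aH, aF)"])
    qed
  qed
  have mult: "\<forall>a\<in>?L. \<forall>b\<in>?L. \<forall>\<alpha>\<in>T.O.span ?G. \<forall>\<beta>\<in>T.O.span ?G. mu (\<alpha> a) (\<beta> b) = (\<beta> \<circ> \<alpha>) (mu a b)"
  proof (intro ballI)
    fix a b \<alpha> \<beta> assume "\<alpha> \<in> T.O.span ?G" "\<beta> \<in> T.O.span ?G"
    then have d: "\<alpha> \<in> centroid sc mu" "\<beta> \<in> centroid sc mu" using Uc by auto
    show "mu (\<alpha> a) (\<beta> b) = (\<beta> \<circ> \<alpha>) (mu a b)"
      by (simp add: T.cent_mL[OF d(1)] T.cent_mR[OF d(2)])
  qed
  have assoc: "\<forall>\<alpha>\<in>T.O.span ?G. \<forall>\<beta>\<in>T.O.span ?G. \<forall>\<gamma>\<in>T.O.span ?G. \<gamma> \<circ> (\<beta> \<circ> \<alpha>) = (\<gamma> \<circ> \<beta>) \<circ> \<alpha>"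
    by (simp add: comp_assoc)
  have bij: "bij_betw (\<lambda>(\<alpha>, \<beta>, \<gamma>). \<alpha> E + \<beta> H + \<gamma> F) (T.O.span ?G \<times> T.O.span ?G \<times> T.O.span ?G) (N_M sc mu ?L)"
    unfolding bij_betw_def using inj img by blast
  show ?thesis unfolding U
    using Uc comp assoc bij mult by blast
qed


end
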